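(* Let $\mathfrak{g}$ be a finite-dimensional complex Lie algebra having property $F$. Then $\mathfrak{g}$ does not admit a periodic prederivation.
   Context: A Lie algebra $\mathfrak{g}$ has property $F$ if every basis of $\mathfrak{g}$ contains three distinct elements $x_1,x_2,x_3$ such that for all $i\neq j$ in $\{1,2,3\}$ one has $[x_i,[x_i,x_j]]\neq 0$ or $[x_j,[x_j,x_i]]\neq 0$. A linear map $P:\mathfrak{g}\to\mathfrak{g}$ is a prederivation if $P([x,[y,z]])=[P(x),[y,z]]+[x,[P(y),z]]+[x,[y,P(z)]]$ for all $x,y,z\in\mathfrak{g}$; it is periodic if $P^m=\mathrm{id}$ for some integer $m\ge 1$. *)

theory Defs
  imports Complex_Main
begin

definition lie_algebra :: "(complex \<Rightarrow> 'a::ab_group_add \<Rightarrow> 'a) \<Rightarrow> ('a \<Rightarrow> 'a \<Rightarrow> 'a) \<Rightarrow> bool" where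
  "lie_algebra sc br \<longleftrightarrow>
     vector_space sc \<and>
     (\<forall>x. Vector_Spaces.linear sc sc (br x)) \<and>
     (\<forall>y. Vector_Spaces.linear sc sc (\<lambda>x. br x y)) \<and>
     (\<forall>x. br x x = 0) \<and>
     (\<forall>x y z. br x (br y z) + br y (br z x) + br z (br x y) = 0)"

definition fin_dim :: "(complex \<Rightarrow> 'a::ab_group_add \<Rightarrow> 'a) \<Rightarrow> bool" where
  "fin_dim sc \<longleftrightarrow> (\<exists>B. finite B \<and> module.span sc B = UNIV)"

definition is_basis :: "(complex \<Rightarrow> 'a::ab_group_add \<Rightarrow> 'a) \<Rightarrow> 'a set \<Rightarrow> bool" where
  "is_basis sc B \<longleftrightarrow> \<not> module.dependent sc B \<and> module.span sc B = UNIV"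

definition property_F :: "(complex \<Rightarrow> 'a::ab_group_add \<Rightarrow> 'a) \<Rightarrow> ('a \<Rightarrow> 'a \<Rightarrow> 'a) \<Rightarrow> bool" where
  "property_F sc br \<longleftrightarrow>
     (\<forall>B. is_basis sc B \<longrightarrow>
        (\<exists>x1\<in>B. \<exists>x2\<in>B. \<exists>x3\<in>B. x1 \<noteq> x2 \<and> x1 \<noteq> x3 \<and> x2 \<noteq> x3 \<and>
           (\<forall>xi\<in>{x1,x2,x3}. \<forall>xj\<in>{x1,x2,x3}. xi \<noteq> xj \<longrightarrow>
              br xi (br xi xj) \<noteq> 0 \<or> br xj (br xj xi) \<noteq> 0)))"

definition prederivation :: "(complex \<Rightarrow> 'a::ab_group_add \<Rightarrow> 'a) \<Rightarrow> ('a \<Rightarrow> 'a \<Rightarrow> 'a) \<Rightarrow> ('a \<Rightarrow> 'a) \<Rightarrow> bool" where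
  "prederivation sc br P \<longleftrightarrow>
     Vector_Spaces.linear sc sc P \<and>
     (\<forall>x y z. P (br x (br y z)) = br (P x) (br y z) + br x (br (P y) z) + br x (br y (P z)))"

definition periodic :: "('a \<Rightarrow> 'a) \<Rightarrow> bool" where
  "periodic P \<longleftrightarrow> (\<exists>m::nat. m \<ge> 1 \<and> P ^^ m = id)"

end

theory Submission
  imports Defs
begin

lemma cfact:
  fixes a b :: complex
  assumes "cmod a = 1" "cmod b = 1" "cmod (2*a+b) = 1"
  shows "b = -a"
proof -
  obtain p q where a: "a = Complex p q" by (cases a)
  obtain r s where b: "b = Complex r s" by (cases b)
  have 1: "p^2+q^2 = 1" using assms(1) a by (simp add: cmod_def)
  have 2: "r^2+s^2 = 1" using assms(2) b by (simp add: cmod_def)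
  have 3: "(2*p+r)^2+(2*q+s)^2 = 1" using assms(3) a b by (simp add: cmod_def)
  have "(p+r)^2+(q+s)^2 = 0" using 1 2 3 by (simp add: power2_eq_square algebra_simps)
  then have "p+r = 0" "q+s=0" by (simp_all add: sum_power2_eq_zero_iff)
  then show ?thesis using a b by (simp add: complex_eq_iff)
qed

lemma unit_root: fixes z :: complex assumes "z^m = 1" "m \<ge> 1" shows "cmod z = 1"
proof -
  have "cmod z ^ m = 1" using assms by (metis norm_one norm_power)
  thus ?thesis using assms(2) power_eq_iff_eq_base[of m "cmod z" 1] by simp
qed

lemma prim: fixes j m :: nat assumes "0 < j" "j < m" shows "cis (2*pi/m)^j \<noteq> 1"
proof
  assume "cis (2*pi/m)^j = 1"
  hence "cis (real j * (2*pi/m)) = 1" by (simp add: DeMoivre)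
  hence "cos (real j * (2*pi/m)) = 1" by (metis cis.simps(1) one_complex.simps(1))
  then obtain n::int where n: "real j * (2*pi/m) = real_of_int n * 2 * pi" using cos_one_2pi_int by blast
  hence "real j = n * m" using assms by (simp add: field_simps)
  hence "int j = n * int m" by linarith
  show False
  proof (cases "n \<le> 0")
    case True
    hence "n * int m \<le> 0" by (simp add: mult_nonpos_nonneg)
    then show ?thesis using \<open>int j = n * int m\<close> assms by linarith
  next
    case False
    hence "n * int m \<ge> 1 * int m" by (intro mult_right_mono) auto
    then show ?thesis using \<open>int j = n * int m\<close> assms by linarith
  qed
qed

lemma lin_scale: "Vector_Spaces.linear s1 s2 f \<Longrightarrow> f (s1 c x) = s2 c (f x)"
  using module_hom.scale linear_iff_module_hom by metis
lemma lin_add: "Vector_Spaces.linear s1 s2 f \<Longrightarrow> f (x + y) = f x + f y"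
  using module_hom.add linear_iff_module_hom by metis
lemma lin_sum: "Vector_Spaces.linear s1 s2 f \<Longrightarrow> f (sum g A) = (\<Sum>a\<in>A. f (g a))"
  using module_hom.sum linear_iff_module_hom by metis

lemma eig_span:
  fixes sc :: "complex \<Rightarrow> 'a::ab_group_add \<Rightarrow> 'a"
  assumes vs: "vector_space sc" and lin: "Vector_Spaces.linear sc sc P" and m: "m \<ge> 1"
    and Pm: "P ^^ m = id"
  shows "module.span sc {x. \<exists>c. P x = sc c x} = UNIV"
proof -
  interpret vector_space sc by fact
  let ?V = "{x. \<exists>c. P x = sc c x}"
  have linj: "Vector_Spaces.linear sc sc (P^^j)" for j
  proof (induction j)
    case 0 then show ?case using linear_id by (simp add: id_def)
  next
    case (Suc j) then show ?case
      using Vector_Spaces.linear_compose[OF Suc lin] by (simp add: comp_def)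
  qed
  define \<zeta> where "\<zeta> = cis (2*pi/m)"
  define \<omega> where "\<omega> = cis (-(2*pi/m))"
  have \<zeta>m: "\<zeta>^m = 1" using m by (simp add: \<zeta>_def DeMoivre)
  have \<omega>\<zeta>: "\<omega> * \<zeta> = 1" by (simp add: \<zeta>_def \<omega>_def cis_mult)
  obtain n where n: "m = Suc n" using m by (cases m) auto
  define E where "E k v = (\<Sum>j<m. sc (\<zeta>^(j*k)) ((P^^j) v))" for k v
  have eig: "P (E k v) = sc (\<omega>^k) (E k v)" for k v
  proof -
    have a: "\<omega>^k * \<zeta>^(Suc j*k) = \<zeta>^(j*k)" for j
    proof -
      have "\<omega>^k * \<zeta>^(Suc j*k) = (\<omega>*\<zeta>)^k * \<zeta>^(j*k)"
        by (simp add: power_add power_mult_distrib)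
      then show ?thesis using \<omega>\<zeta> by simp
    qed
    have b: "\<zeta>^(n*k) = \<omega>^k"
    proof -
      have "\<omega>^k = \<omega>^k * (\<zeta>^m)^k" using \<zeta>m by simp
      also have "\<dots> = (\<omega>*\<zeta>)^k * \<zeta>^(n*k)"
        by (simp add: n power_add power_mult_distrib power_mult[symmetric] algebra_simps)
      finally show ?thesis using \<omega>\<zeta> by simp
    qed
    have Pv: "P ((P^^n) v) = v" using Pm n by (metis funpow.simps(2) comp_apply id_apply)
    have "P (E k v) = (\<Sum>j<Suc n. sc (\<zeta>^(j*k)) ((P^^Suc j) v))"
      unfolding E_def n lin_sum[OF lin] lin_scale[OF lin] by simp
    also have "\<dots> = (\<Sum>j<n. sc (\<zeta>^(j*k)) ((P^^Suc j) v)) + sc (\<omega>^k) v"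
      by (simp add: Pv b)
    also have "\<dots> = sc (\<omega>^k * \<zeta>^(0*k)) ((P^^0) v) + (\<Sum>j<n. sc (\<omega>^k * \<zeta>^(Suc j*k)) ((P^^Suc j) v))"
      by (simp only: a) (simp add: add.commute)
    also have "\<dots> = (\<Sum>j<Suc n. sc (\<omega>^k * \<zeta>^(j*k)) ((P^^j) v))"
      by (simp only: sum.lessThan_Suc_shift)
    also have "\<dots> = sc (\<omega>^k) (E k v)"
      unfolding E_def n scale_sum_right by simp
    finally show ?thesis .
  qed
  have gs: "(\<Sum>k<m. (\<zeta>^j)^k) = (if j = 0 then of_nat m else 0)" if "j < m" for j
  proof (cases "j = 0")
    case False
    have "\<zeta>^j \<noteq> 1" using prim[of j m] False that by (simp add: \<zeta>_def)
    moreover have "(\<zeta>^j)^m = 1" using \<zeta>m by (metis power_mult power_mult_distrib power_one mult.commute)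
    ultimately show ?thesis using False by (simp add: sum_gp_strict)
  qed simp
  have sumE: "(\<Sum>k<m. E k v) = sc (of_nat m) v" for v
  proof -
    have "(\<Sum>k<m. E k v) = (\<Sum>j<m. \<Sum>k<m. sc (\<zeta>^(j*k)) ((P^^j) v))"
      unfolding E_def by (rule sum.swap)
    also have "\<dots> = (\<Sum>j<m. sc (\<Sum>k<m. (\<zeta>^j)^k) ((P^^j) v))"
      by (simp add: scale_sum_left power_mult)
    also have "\<dots> = (\<Sum>j<m. if j = 0 then sc (of_nat m) v else 0)"
      by (rule sum.cong) (auto simp: gs)
    also have "\<dots> = sc (of_nat m) v" using m by (simp add: sum.delta)
    finally show ?thesis .
  qed
  have "v \<in> span ?V" for v
  proof -
    have "(\<Sum>k<m. E k v) \<in> span ?V"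
      by (rule span_sum) (auto intro!: span_base simp: eig)
    hence "sc (1 / of_nat m) (\<Sum>k<m. E k v) \<in> span ?V" by (rule span_scale)
    moreover have "sc (1 / of_nat m) (\<Sum>k<m. E k v) = v" using m by (simp add: sumE)
    ultimately show ?thesis by simp
  qed
  then show ?thesis by auto
qed

theorem proposition5p19:
  fixes sc :: "complex \<Rightarrow> 'a::ab_group_add \<Rightarrow> 'a" and br :: "'a \<Rightarrow> 'a \<Rightarrow> 'a"
  assumes "lie_algebra sc br" and "fin_dim sc" and "property_F sc br"
  shows "\<not> (\<exists>P. prederivation sc br P \<and> periodic P)"
proof
  assume "\<exists>P. prederivation sc br P \<and> periodic P"
  then obtain P m where lin: "Vector_Spaces.linear sc sc P"
    and pre: "\<And>x y z. P (br x (br y z)) = br (P x) (br y z) + br x (br (P y) z) + br x (br y (P z))"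
    and m: "m \<ge> 1" and Pm: "P ^^ m = id"
    unfolding prederivation_def periodic_def by blast
  have vs: "vector_space sc" using assms(1) unfolding lie_algebra_def by blast
  interpret vector_space sc by fact
  have LR: "br x (sc c y) = sc c (br x y)" for x y c
    using assms(1) unfolding lie_algebra_def using lin_scale by metis
  have LL: "br (sc c x) y = sc c (br x y)" for x y c
  proof -
    have "Vector_Spaces.linear sc sc (\<lambda>x. br x y)" using assms(1) unfolding lie_algebra_def by blast
    from lin_scale[OF this] show ?thesis .
  qed
  have unit: "cmod c = 1" if "P x = sc c x" "x \<noteq> 0" for x c
  proof -
    have "(P^^j) x = sc (c^j) x" for j
    proof (induction j)
      case (Suc j)
      have "(P^^Suc j) x = P (sc (c^j) x)" using Suc by simp
      also have "\<dots> = sc (c^Suc j) x" using that lin_scale[OF lin] by (simp add: mult.commute)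
      finally show ?case .
    qed simp
    from this[of m] Pm have "x = sc (c^m) x" by simp
    hence "sc (c^m - 1) x = 0" by (simp add: scale_left_diff_distrib)
    hence "c^m = 1" using that(2) by simp
    then show ?thesis using unit_root m by blast
  qed
  have pair: "a + b = 0" if "P x = sc a x" "P y = sc b y" "x \<noteq> 0" "y \<noteq> 0"
    "br x (br x y) \<noteq> 0" for x y a b
  proof -
    let ?w = "br x (br x y)"
    have "P ?w = br (sc a x) (br x y) + br x (br (sc a x) y) + br x (br x (sc b y))"
      by (simp only: pre[of x x y] that(1,2))
    also have "\<dots> = sc a ?w + sc a ?w + sc b ?w" by (simp only: LL LR)
    also have "\<dots> = sc (a + a + b) ?w" by (simp only: scale_left_distrib)
    also have "a + a + b = 2*a+b" by simp
    finally have "P ?w = sc (2*a+b) ?w" .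
    hence "cmod (2*a+b) = 1" using unit[of ?w "2*a+b"] that(5) by simp
    moreover have "cmod a = 1" using unit[of x a] that(1,3) by simp
    moreover have "cmod b = 1" using unit[of y b] that(2,4) by simp
    ultimately have "b = -a" using cfact by simp
    thus ?thesis by simp
  qed
  let ?V = "{x. \<exists>c. P x = sc c x}"
  obtain B where B0: "{} \<subseteq> B" and B: "B \<subseteq> ?V" "independent B" "?V \<subseteq> span B"
    by (rule maximal_independent_subset_extend[of "{}" ?V]) (simp_all add: independent_empty)
  have "UNIV = span ?V" using eig_span[OF vs lin m Pm] by simp
  also have "\<dots> \<subseteq> span B" using B(3) by (simp add: span_minimal)
  finally have "span B = UNIV" by blast
  hence "is_basis sc B" using B(2) unfolding is_basis_def by simp
  note PF = assms(3)[unfolded property_F_def, THEN spec[of _ B], THEN mp, OF this]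
  from PF obtain x1 x2 x3 where x: "x1 \<in> B" "x2 \<in> B" "x3 \<in> B" and x': "x1 \<noteq> x2 \<and> x1 \<noteq> x3 \<and> x2 \<noteq> x3 \<and>
           (\<forall>xi\<in>{x1,x2,x3}. \<forall>xj\<in>{x1,x2,x3}. xi \<noteq> xj \<longrightarrow>
              br xi (br xi xj) \<noteq> 0 \<or> br xj (br xj xi) \<noteq> 0)"
    by (elim bexE)
  have xd: "x1 \<noteq> x2" "x1 \<noteq> x3" "x2 \<noteq> x3" using x' by simp_all
  have F: "\<forall>xi\<in>{x1,x2,x3}. \<forall>xj\<in>{x1,x2,x3}. xi \<noteq> xj \<longrightarrow>
              br xi (br xi xj) \<noteq> 0 \<or> br xj (br xj xi) \<noteq> 0" using x' by (elim conjE)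
  have nz: "x \<noteq> 0" if "x \<in> B" for x using B(2) that dependent_zero by blast
  obtain c1 c2 c3 where c: "P x1 = sc c1 x1" "P x2 = sc c2 x2" "P x3 = sc c3 x3"
    using x B(1) by blast
  have pp: "a + b = 0" if "x \<in> B" "y \<in> B" "P x = sc a x" "P y = sc b y"
    "br x (br x y) \<noteq> 0 \<or> br y (br y x) \<noteq> 0" for x y a b
  proof -
    from that(5) show ?thesis
    proof
      assume "br x (br x y) \<noteq> 0"
      thus ?thesis using pair[OF that(3,4) nz[OF that(1)] nz[OF that(2)]] by blast
    next
      assume "br y (br y x) \<noteq> 0"
      hence "b + a = 0" using pair[OF that(4,3) nz[OF that(2)] nz[OF that(1)]] by blast
      thus ?thesis by (simp only: add.commute)
    qed
  qed
  have F': "br xi (br xi xj) \<noteq> 0 \<or> br xj (br xj xi) \<noteq> 0"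
    if "xi \<in> {x1,x2,x3}" "xj \<in> {x1,x2,x3}" "xi \<noteq> xj" for xi xj
    using F that by (meson bspec)
  have e1: "c1 + c2 = 0" by (rule pp[OF x(1,2) c(1,2) F'[of x1 x2]]) (simp_all add: xd)
  have e2: "c1 + c3 = 0" by (rule pp[OF x(1,3) c(1,3) F'[of x1 x3]]) (simp_all add: xd)
  have e3: "c2 + c3 = 0" by (rule pp[OF x(2,3) c(2,3) F'[of x2 x3]]) (simp_all add: xd)
  have "2*c2 = (c1+c2) + (c2+c3) - (c1+c3)" by (simp add: algebra_simps)
  hence "c2 = 0" using e1 e2 e3 by simp
  moreover have "cmod c2 = 1" using unit c(2) nz x(2) by blast
  ultimately show False by simp
qed

end
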